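(* For all arbitrarily large integers $n$ and $y$ such that $n=\sum_{i=0}^h y^i$ for some integer $h\ge0$, there exists a trie $\mathcal T$ with $n$ nodes and height $h$ such that (1) $n\mathcal H_k(\mathcal T)=0$ for every integer $k\ge1$, and (2) $(n-1)\mathcal H^{label}_k(\mathcal T)\ge (n-1)\log y$ for every integer $k\ge0$.
   Context: A trie over a finite totally ordered alphabet $\Sigma$ is a rooted ordered tree with edges labeled by symbols of $\Sigma$ such that edges leaving the same node have distinct labels and siblings are ordered by their incoming labels; its height is the maximum depth of a node (root has depth 0). For node $u$: $out(u)$ is the set of labels of edges leaving $u$; $\lambda(u)$ is the label of the edge entering $u$, with $\lambda(\text{root})=\#\notin\Sigma$; $\pi(u)$ is the parent, $\pi(\text{root})=\text{root}$; $\lambda_0(u)=\epsilon$, $\lambda_k(u)=\lambda_{k-1}(\pi(u))\cdot\lambda(u)$. For a length-$k$ string $w$ and $c\in\Sigma$: $n_w=|\{u:\lambda_k(u)=w\}|$, $n_{w,c}=|\{u:\lambda_k(u)=w,\ c\in out(u)\}|$. Logs base 2, $0\log(x/0)=0$. $\mathcal H_k(\mathcal T)=\sum_{w}\sum_{c\in\Sigma}\left[\frac{n_{w,c}}{n}\log\frac{n_w}{n_{w,c}}+\frac{n_w-n_{w,c}}{n}\log\frac{n_w}{n_w-n_{w,c}}\right]$ over contexts $w$ with $n_w>0$. For a string $X$ of length $\ell>0$ with $\ell_c$ occurrences of $c$, $\mathcal H_0(X)=\sum_c\frac{\ell_c}{\ell}\log\frac{\ell}{\ell_c}$ (and $0$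 for the empty string). $cover(w)$ is the concatenation (any order) of the labels of all edges leaving nodes $u$ with $\lambda_k(u)=w$, and $(n-1)\mathcal H^{label}_k(\mathcal T)=\sum_w|cover(w)|\,\mathcal H_0(cover(w))$. *)

theory Defs
  imports Complex_Main "HOL-Library.List_Lexorder"
begin

text \<open>A trie over a finite alphabet Sg (a finite subset of the totally ordered type nat)
  is represented by its set of nodes, each node being identified with the string of edge
  labels on the path from the root (the root is the empty string). Prefix-closedness makes
  this a rooted tree; edges leaving a node automatically carry distinct labels, and
  siblings are ordered by their labels.\<close>

definition is_trie :: "nat set \<Rightarrow> nat list set \<Rightarrow> bool" where
  "is_trie Sg T \<longleftrightarrow> finite Sg \<and> finite T \<and> [] \<in> T \<and>
     (\<forall>u\<in>T. set u \<subseteq> Sg) \<and> (\<forall>u c. u @ [c] \<in> T \<longrightarrow> u \<in> T)"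

definition trie_height :: "nat list set \<Rightarrow> nat" where
  "trie_height T = Max (length ` T)"

definition out :: "nat list set \<Rightarrow> nat list \<Rightarrow> nat set" where
  "out T u = {c. u @ [c] \<in> T}"

text \<open>lambda(u): label of the edge entering u; None plays the role of the symbol #\<close>
definition lam :: "nat list \<Rightarrow> nat option" where
  "lam u = (if u = [] then None else Some (last u))"

text \<open>parent; the parent of the root is the root (butlast [] = [])\<close>
definition par :: "nat list \<Rightarrow> nat list" where
  "par u = butlast u"

fun lamk :: "nat \<Rightarrow> nat list \<Rightarrow> nat option list" where
  "lamk 0 u = []"
| "lamk (Suc k) u = lamk k (par u) @ [lam u]"

definition n_w :: "nat list set \<Rightarrow> nat \<Rightarrow> nat option list \<Rightarrow> nat" where
  "n_w T k w = card {u\<in>T. lamk k u = w}"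

definition n_wc :: "nat list set \<Rightarrow> nat \<Rightarrow> nat option list \<Rightarrow> nat \<Rightarrow> nat" where
  "n_wc T k w c = card {u\<in>T. lamk k u = w \<and> c \<in> out T u}"

definition eterm :: "nat \<Rightarrow> nat \<Rightarrow> nat \<Rightarrow> real" where
  "eterm n a b = (if a = 0 then 0 else real a / real n * log 2 (real b / real a))"

text \<open>k-th order entropy H_k(T); sum over contexts w with n_w > 0, i.e. w in lamk k ` T\<close>
definition Hk :: "nat set \<Rightarrow> nat list set \<Rightarrow> nat \<Rightarrow> real" where
  "Hk Sg T k = (\<Sum>w\<in>lamk k ` T. \<Sum>c\<in>Sg.
      eterm (card T) (n_wc T k w c) (n_w T k w)
    + eterm (card T) (n_w T k w - n_wc T k w c) (n_w T k w))"

definition H0 :: "nat list \<Rightarrow> real" where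
  "H0 X = (if X = [] then 0 else
     (\<Sum>c\<in>set X. real (count_list X c) / real (length X)
                   * log 2 (real (length X) / real (count_list X c))))"

definition cover :: "nat list set \<Rightarrow> nat \<Rightarrow> nat option list \<Rightarrow> nat list" where
  "cover T k w = concat (map (\<lambda>u. sorted_list_of_set (out T u))
                              (sorted_list_of_set {u\<in>T. lamk k u = w}))"

text \<open>(n-1) H^label_k(T) = sum_w |cover(w)| H0(cover(w))\<close>
definition nHlabel :: "nat list set \<Rightarrow> nat \<Rightarrow> real" where
  "nHlabel T k = (\<Sum>w\<in>lamk k ` T. real (length (cover T k w)) * H0 (cover T k w))"

end

theory Submission
  imports Defs
begin

lemma H0_ge:
  assumes y: "y \<ge> (1::nat)" and X: "X \<noteq> []" and cnt: "\<And>c. y * count_list X c \<le> length X"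
  shows "H0 X \<ge> log 2 (real y)"
proof -
  let ?L = "real (length X)"
  have L: "?L > 0" using X by simp
  have "(\<Sum>c\<in>set X. real (count_list X c) / ?L * log 2 (real y))
      \<le> (\<Sum>c\<in>set X. real (count_list X c) / ?L * log 2 (?L / real (count_list X c)))"
  proof (rule sum_mono)
    fix c assume c: "c \<in> set X"
    then have cp: "count_list X c > 0" by (metis count_list_0_iff gr0I)
    have "real y * real (count_list X c) \<le> ?L" using cnt[of c] by (metis of_nat_le_iff of_nat_mult)
    then have "real y \<le> ?L / real (count_list X c)" using cp by (simp add: field_simps)
    then have "log 2 (real y) \<le> log 2 (?L / real (count_list X c))" using y by simp
    then show "real (count_list X c) / ?L * log 2 (real y) \<le> real (count_list X c) / ?L * log 2 (?L / real (count_list X c))"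
      using L by (intro mult_left_mono) auto
  qed
  also have "\<dots> = H0 X" using X by (simp add: H0_def)
  finally have "(\<Sum>c\<in>set X. real (count_list X c)) / ?L * log 2 (real y) \<le> H0 X"
    by (simp add: sum_divide_distrib[symmetric] sum_distrib_right[symmetric])
  moreover have "(\<Sum>c\<in>set X. real (count_list X c)) = ?L"
    using sum_count_set[of X "set X"] by (metis finite_set of_nat_sum order_refl)
  ultimately show ?thesis using L by simp
qed

lemma count_distinct: "distinct xs \<Longrightarrow> count_list xs c = (if c \<in> set xs then 1 else 0)"
  by (induct xs) auto

lemma count_sorted_set: "finite A \<Longrightarrow> count_list (sorted_list_of_set A) c = (if c \<in> A then 1 else 0)"
  by (simp add: count_distinct)

lemma count_concat: "count_list (concat xss) c = sum_list (map (\<lambda>xs. count_list xs c) xss)"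
  by (induct xss) auto

lemma out_sum:
  assumes "finite T" "[] \<in> T" "\<And>u c. u @ [c] \<in> T \<Longrightarrow> u \<in> T"
  shows "(\<Sum>u\<in>T. card (out T u)) = card T - 1"
proof -
  have fo: "\<And>u. finite (out T u)"
  proof -
    fix u
    have "out T u \<subseteq> (\<lambda>v. last v) ` T" unfolding out_def by (auto intro: image_eqI[where x="u@[_]"])
    then show "finite (out T u)" using assms(1) finite_subset by blast
  qed
  have "(\<Sum>u\<in>T. card (out T u)) = card (Sigma T (out T))"
    using assms(1) fo by (simp add: card_SigmaI)
  also have "\<dots> = card ((\<lambda>(u,c). u @ [c]) ` Sigma T (out T))"
    by (rule card_image[symmetric]) (auto simp: inj_on_def)
  also have "(\<lambda>(u,c). u @ [c]) ` Sigma T (out T) = T - {[]}"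
  proof (rule set_eqI, rule iffI)
    fix v assume "v \<in> T - {[]}"
    then have "v = butlast v @ [last v]" "v \<in> T" by auto
    then show "v \<in> (\<lambda>(u,c). u @ [c]) ` Sigma T (out T)"
      using assms(3)[of "butlast v" "last v"] unfolding out_def
      by (intro image_eqI[where x="(butlast v, last v)"]) auto
  qed (auto simp: out_def)
  finally show ?thesis using assms(1,2) by simp
qed

lemma out_finite: "finite T \<Longrightarrow> finite (out T u)"
proof -
  assume "finite T"
  have "out T u \<subseteq> (\<lambda>v. last v) ` T" unfolding out_def by (auto intro: image_eqI[where x="u@[_]"])
  then show "finite (out T u)" using \<open>finite T\<close> finite_subset by blast
qed

lemma cover_len: "finite T \<Longrightarrow> length (cover T k w) = (\<Sum>u\<in>{u\<in>T. lamk k u = w}. card (out T u))"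
  unfolding cover_def
  by (simp add: length_concat o_def sum_list_distinct_conv_sum_set)

lemma cover_count: "finite T \<Longrightarrow> count_list (cover T k w) c = (\<Sum>u\<in>{u\<in>T. lamk k u = w}. (if c \<in> out T u then 1 else 0))"
  unfolding cover_def
  by (simp add: count_concat o_def sum_list_distinct_conv_sum_set count_sorted_set out_finite)

lemma nHlabel_ge:
  assumes "finite T" "[] \<in> T" "\<And>u c. u @ [c] \<in> T \<Longrightarrow> u \<in> T" "y \<ge> (1::nat)"
    and oy: "\<And>u. u \<in> T \<Longrightarrow> out T u = {} \<or> card (out T u) = y"
  shows "nHlabel T k \<ge> real (card T - 1) * log 2 (real y)"
proof -
  have each: "real (length (cover T k w)) * log 2 (real y) \<le> real (length (cover T k w)) * H0 (cover T k w)" for w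
  proof (cases "cover T k w = []")
    case True then show ?thesis by simp
  next
    case False
    have "y * count_list (cover T k w) c \<le> length (cover T k w)" for c
    proof -
      have "y * count_list (cover T k w) c = (\<Sum>u\<in>{u\<in>T. lamk k u = w}. y * (if c \<in> out T u then 1 else 0))"
        using assms(1) by (simp add: cover_count sum_distrib_left)
      also have "\<dots> \<le> (\<Sum>u\<in>{u\<in>T. lamk k u = w}. card (out T u))"
        by (rule sum_mono) (use oy in auto)
      finally show ?thesis using assms(1) by (simp add: cover_len)
    qed
    then have "H0 (cover T k w) \<ge> log 2 (real y)" using H0_ge assms(4) False by blast
    then show ?thesis by (intro mult_left_mono) auto
  qed
  have "real (card T - 1) = real (\<Sum>u\<in>T. card (out T u))" using out_sum assms(1-3) by simp
  also have "\<dots> = (\<Sum>w\<in>lamk k ` T. real (length (cover T k w)))"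
    using assms(1) by (simp add: cover_len sum.image_gen[OF assms(1), of _ "lamk k"])
  finally have "real (card T - 1) * log 2 (real y) = (\<Sum>w\<in>lamk k ` T. real (length (cover T k w)) * log 2 (real y))"
    by (simp add: sum_distrib_right)
  also have "\<dots> \<le> nHlabel T k" unfolding nHlabel_def by (rule sum_mono) (rule each)
  finally show ?thesis .
qed


lemma Hk_zero:
  assumes "\<And>u v. u \<in> T \<Longrightarrow> v \<in> T \<Longrightarrow> lamk k u = lamk k v \<Longrightarrow> out T u = out T v"
  shows "Hk Sg T k = 0"
  unfolding Hk_def
proof (intro sum.neutral ballI)
  fix w c assume "w \<in> lamk k ` T"
  then obtain u0 where u0: "u0 \<in> T" "w = lamk k u0" by auto
  show "eterm (card T) (n_wc T k w c) (n_w T k w) + eterm (card T) (n_w T k w - n_wc T k w c) (n_w T k w) = 0"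
  proof (cases "c \<in> out T u0")
    case True
    then have "{u\<in>T. lamk k u = w \<and> c \<in> out T u} = {u\<in>T. lamk k u = w}"
      using assms u0 by blast
    then have "n_wc T k w c = n_w T k w" unfolding n_wc_def n_w_def by simp
    then show ?thesis by (simp add: eterm_def)
  next
    case False
    then have "{u\<in>T. lamk k u = w \<and> c \<in> out T u} = {}"
      using assms u0 by blast
    then have "n_wc T k w c = 0" unfolding n_wc_def by (metis card.empty)
    then show ?thesis by (simp add: eterm_def)
  qed
qed

definition Pb :: "nat \<Rightarrow> nat list \<Rightarrow> bool" where
  "Pb y u \<longleftrightarrow> (\<forall>i<length u. i*y \<le> u!i \<and> u!i < i*y+y)"

definition Tr :: "nat \<Rightarrow> nat \<Rightarrow> nat list set" where
  "Tr y h = {u. length u \<le> h \<and> Pb y u}"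

lemma Pb_snoc: "Pb y (u @ [c]) \<longleftrightarrow> Pb y u \<and> length u * y \<le> c \<and> c < length u * y + y"
  unfolding Pb_def by (auto simp: nth_append less_Suc_eq)

lemma level_card: "card {u. length u = d \<and> Pb y u} = y ^ d"
proof (induct d)
  case 0
  have "{u. length u = 0 \<and> Pb y u} = {[]}" by (auto simp: Pb_def)
  then show ?case by simp
next
  case (Suc d)
  have "{u. length u = Suc d \<and> Pb y u} = (\<lambda>(u,c). u @ [c]) ` ({u. length u = d \<and> Pb y u} \<times> {d*y..<d*y+y})"
  proof (rule set_eqI, rule iffI)
    fix v assume v: "v \<in> {u. length u = Suc d \<and> Pb y u}"
    then have "v \<noteq> []" by auto
    then have e: "v = butlast v @ [last v]" by simp
    then have "Pb y (butlast v @ [last v])" using v by simp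
    then show "v \<in> (\<lambda>(u,c). u @ [c]) ` ({u. length u = d \<and> Pb y u} \<times> {d*y..<d*y+y})"
      using v e unfolding Pb_snoc by (intro image_eqI[where x="(butlast v, last v)"]) auto
  qed (auto simp: Pb_snoc)
  also have "card \<dots> = card ({u. length u = d \<and> Pb y u} \<times> {d*y..<d*y+y})"
    by (rule card_image) (auto simp: inj_on_def)
  also have "\<dots> = y ^ Suc d" using Suc by (simp add: card_cartesian_product)
  finally show ?case .
qed

lemma Tr_finite: "finite (Tr y h)"
proof -
  have "Tr y h \<subseteq> {xs. set xs \<subseteq> {0..<h*y} \<and> length xs \<le> h}"
  proof
    fix u assume u: "u \<in> Tr y h"
    have "u ! i < h * y" if "i < length u" for i
    proof -
      have "u!i < i*y+y" using u that by (auto simp: Tr_def Pb_def)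
      also have "i*y+y = (i+1)*y" by simp
      also have "\<dots> \<le> h*y" using u that by (intro mult_right_mono) (auto simp: Tr_def)
      finally show ?thesis .
    qed
    then show "u \<in> {xs. set xs \<subseteq> {0..<h*y} \<and> length xs \<le> h}" using u
      by (auto simp: Tr_def in_set_conv_nth)
  qed
  then show ?thesis using finite_lists_length_le[of "{0..<h*y}" h] finite_subset by blast
qed

lemma Tr_card: "card (Tr y h) = (\<Sum>i\<le>h. y ^ i)"
proof -
  have "Tr y h = (\<Union>d\<in>{..h}. {u. length u = d \<and> Pb y u})" by (auto simp: Tr_def)
  then have "card (Tr y h) = (\<Sum>d\<le>h. card {u. length u = d \<and> Pb y u})"
    using Tr_finite[of y h]
    by (simp, intro card_UN_disjoint) (auto intro: finite_subset)
  then show ?thesis by (simp add: level_card)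
qed


lemma Tr_set: "u \<in> Tr y h \<Longrightarrow> set u \<subseteq> {0..<h*y}"
proof -
  assume u: "u \<in> Tr y h"
  have "u ! i < h * y" if "i < length u" for i
  proof -
    have "u!i < i*y+y" using u that by (auto simp: Tr_def Pb_def)
    also have "i*y+y = (i+1)*y" by simp
    also have "\<dots> \<le> h*y" using u that by (intro mult_right_mono) (auto simp: Tr_def)
    finally show ?thesis .
  qed
  then show ?thesis by (auto simp: in_set_conv_nth)
qed

lemma Tr_out: "u \<in> Tr y h \<Longrightarrow> out (Tr y h) u = (if length u < h then {length u*y..<length u*y+y} else {})"
  unfolding out_def Tr_def by (auto simp: Pb_snoc)

lemma Tr_lam: assumes "u \<in> Tr y h" "y > 0"
  shows "length u = (case lam u of None \<Rightarrow> 0 | Some c \<Rightarrow> c div y + 1)"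
proof (cases "u = []")
  case True then show ?thesis by (simp add: lam_def)
next
  case False
  then have e: "u = butlast u @ [last u]" by simp
  have "Pb y (butlast u @ [last u])" using assms e by (simp add: Tr_def)
  then have "length (butlast u) * y \<le> last u" "last u < length (butlast u) * y + y"
    by (auto simp: Pb_snoc)
  then have "last u div y = length (butlast u)" using assms(2)
    by (metis add.commute div_nat_eqI mult.commute mult_Suc_right)
  then show ?thesis using False by (simp add: lam_def)
qed

lemma lamk_last: "lamk (Suc k) u = lamk (Suc k) v \<Longrightarrow> lam u = lam v"
  by simp

theorem proposition1:
  fixes n y h :: nat
  assumes "y \<ge> 2"
    and "n = (\<Sum>i\<le>h. y ^ i)"
  shows "\<exists>Sg T. is_trie Sg T \<and> card T = n \<and> trie_height T = h \<and>
           (\<forall>k\<ge>1. real n * Hk Sg T k = 0) \<and>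
           (\<forall>k. nHlabel T k \<ge> real (n - 1) * log 2 (real y))"
proof (intro exI conjI allI impI)
  let ?T = "Tr y h"
  have e: "[] \<in> ?T" by (simp add: Tr_def Pb_def)
  have pc: "u \<in> ?T" if "u @ [c] \<in> ?T" for u c using that by (auto simp: Tr_def Pb_snoc)
  show "is_trie {0..<h*y} ?T" unfolding is_trie_def using Tr_finite e pc Tr_set by blast
  show cT: "card ?T = n" using assms(2) Tr_card by simp
  show "trie_height ?T = h" unfolding trie_height_def
  proof (rule Max_eqI)
    show "finite (length ` ?T)" using Tr_finite by simp
    show "x \<le> h" if "x \<in> length ` ?T" for x using that by (auto simp: Tr_def)
    have "map (\<lambda>i. i*y) [0..<h] \<in> ?T" using assms(1) by (simp add: Tr_def Pb_def)
    then show "h \<in> length ` ?T" by (metis image_eqI length_map length_upt minus_nat.diff_0)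
  qed
  fix k :: nat
  show "nHlabel ?T k \<ge> real (n - 1) * log 2 (real y)"
    using nHlabel_ge[of ?T y k] Tr_finite e pc assms(1) cT Tr_out by auto
  assume "k \<ge> 1"
  then obtain k' where k: "k = Suc k'" by (cases k) auto
  have "Hk {0..<h*y} ?T k = 0"
  proof (rule Hk_zero)
    fix u v assume uv: "u \<in> ?T" "v \<in> ?T" "lamk k u = lamk k v"
    then have "lam u = lam v" using k lamk_last by blast
    then have "length u = length v" using Tr_lam[OF uv(1)] Tr_lam[OF uv(2)] assms(1) by simp
    then show "out ?T u = out ?T v" using Tr_out uv by simp
  qed
  then show "real n * Hk {0..<h*y} ?T k = 0" by simp
qed

end
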